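(* Let $n\ge 3$, $0<m<\frac{n-2}{n}$, $m\ne\frac{n-2}{n+2}$, $\lambda>0$, $\beta>0$. Let $v$ be the radially symmetric solution described in the context, $w(s)=r^2v(r)^{1-m}$ with $s=\log r$, $h(s)=w(s)-\frac{2(n-1)(n-2-nm)}{(1-m)\beta}s$, $h_1(s)=h(s)+\frac{(n-1)[n-2-(n+2)m]}{(1-m)\beta}\log s$, $K(\lambda,\beta)=\lim_{s\to\infty}h_1(s)$ (a finite limit), and \[ h_2(s)=h_1(s)-K(\lambda,\beta)-\frac{(n-1)(n-2-(n+2)m)^2}{2(n-2-nm)(1-m)\beta}\cdot\frac{1+\log s}{s}. \] Let \[ a_1(\lambda,\beta)=\frac{2(1-2m)(n-1)(n-2-nm)}{(1-m)^2}+\frac{(n-1)(n-2-(n+2)m)^2}{(1-m)^2}+\frac{n-2-(n+2)m}{1-m}K(\lambda,\beta)\beta . \] Then \[ \lim_{s\to\infty}s^2h_{2,s}(s)=\frac{(1-m)a_1(\lambda,\beta)}{2(n-2-nm)\beta}. \]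
   Context: $v=v(r)$, $r=|x|$, is the unique radially symmetric positive classical solution of $\frac{n-1}{m}\Delta v^m+\frac{2\beta}{1-m}v+\beta x\cdot\nabla v=0$ in $\mathbb{R}^n$ with $v(0)=\lambda$. $h_{2,s}$ denotes the derivative of $h_2$ in $s$. *)

theory Defs
  imports "HOL-Analysis.Analysis"
begin

text \<open>Radial form of the equation
  (n-1)/m \<Delta>(v^m) + 2\<beta>/(1-m) v + \<beta> x\<cdot>\<nabla>v = 0 in R^n, v(0) = \<lambda>,
  for a positive radially symmetric classical solution v(x) = v(|x|).
  With r = |x|: \<Delta>f = f'' + (n-1)/r f', x\<cdot>\<nabla>v = r v'.
  Regularity at the origin: v continuous on [0,\<infinity>) and v'(r) \<rightarrow> 0 as r \<rightarrow> 0+.\<close>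
definition radial_sol :: "nat \<Rightarrow> real \<Rightarrow> real \<Rightarrow> real \<Rightarrow> (real \<Rightarrow> real) \<Rightarrow> bool" where
  "radial_sol n m \<beta> lam v \<longleftrightarrow>
     (\<forall>r\<ge>0. v r > 0) \<and> v 0 = lam \<and> continuous_on {0..} v \<and>
     (\<exists>v1 u1 u2.
        (\<forall>r>0. (v has_real_derivative v1 r) (at r) \<and>
               ((\<lambda>t. v t powr m) has_real_derivative u1 r) (at r) \<and>
               (u1 has_real_derivative u2 r) (at r) \<and>
               (real n - 1) / m * (u2 r + (real n - 1) / r * u1 r)
                 + 2 * \<beta> / (1 - m) * v r + \<beta> * r * v1 r = 0) \<and>
        (v1 \<longlongrightarrow> 0) (at_right 0))"

definition w_fun :: "real \<Rightarrow> (real \<Rightarrow> real) \<Rightarrow> real \<Rightarrow> real" where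
  "w_fun m v s = (exp s)\<^sup>2 * (v (exp s)) powr (1 - m)"

definition h_fun :: "nat \<Rightarrow> real \<Rightarrow> real \<Rightarrow> (real \<Rightarrow> real) \<Rightarrow> real \<Rightarrow> real" where
  "h_fun n m \<beta> v s = w_fun m v s
     - 2 * (real n - 1) * (real n - 2 - real n * m) / ((1 - m) * \<beta>) * s"

definition h1_fun :: "nat \<Rightarrow> real \<Rightarrow> real \<Rightarrow> (real \<Rightarrow> real) \<Rightarrow> real \<Rightarrow> real" where
  "h1_fun n m \<beta> v s = h_fun n m \<beta> v s
     + (real n - 1) * (real n - 2 - (real n + 2) * m) / ((1 - m) * \<beta>) * ln s"

definition h2_fun :: "nat \<Rightarrow> real \<Rightarrow> real \<Rightarrow> (real \<Rightarrow> real) \<Rightarrow> real \<Rightarrow> real \<Rightarrow> real" where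
  "h2_fun n m \<beta> v K s = h1_fun n m \<beta> v s - K
     - (real n - 1) * (real n - 2 - (real n + 2) * m)\<^sup>2
         / (2 * (real n - 2 - real n * m) * (1 - m) * \<beta>) * ((1 + ln s) / s)"

definition a1_fun :: "nat \<Rightarrow> real \<Rightarrow> real \<Rightarrow> real \<Rightarrow> real" where
  "a1_fun n m \<beta> K =
     2 * (1 - 2 * m) * (real n - 1) * (real n - 2 - real n * m) / (1 - m)\<^sup>2
     + (real n - 1) * (real n - 2 - (real n + 2) * m)\<^sup>2 / (1 - m)\<^sup>2
     + (real n - 2 - (real n + 2) * m) / (1 - m) * K * \<beta>"

end

theory Submission
  imports Defs "HOL-Real_Asymp.Real_Asymp"
begin


lemma damp_stay:
  fixes F F' :: "real \<Rightarrow> real"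
  assumes der: "\<forall>s\<ge>s0. (F has_real_derivative F' s) (at s)"
    and neg: "\<forall>s\<ge>s0. F s > th \<longrightarrow> F' s < 0"
    and t: "t \<ge> s0" "F t \<le> th" and st: "s \<ge> t"
  shows "F s \<le> th"
proof (rule ccontr)
  assume "\<not> F s \<le> th"
  hence Fs: "F s > th" by simp
  define T where "T = {\<tau>\<in>{t..s}. F \<tau> \<le> th}"
  have cont: "continuous_on {t..s} F"
    using der t st by (meson DERIV_continuous atLeastAtMost_iff continuous_at_imp_continuous_on order_trans)
  have "T = {t..s} \<inter> F -` {..th}" unfolding T_def by auto
  hence "closed T" using continuous_closed_preimage[OF cont closed_atLeastAtMost closed_atMost] by simp
  moreover have "t \<in> T" using t st by (simp add: T_def)
  moreover have "bdd_above T" unfolding T_def by (rule bdd_aboveI[of _ s]) auto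
  ultimately have TS: "Sup T \<in> T" using closed_contains_Sup by blast
  define a where "a = Sup T"
  have aT: "a \<in> T" using TS a_def by simp
  hence a1: "t \<le> a" "a \<le> s" "F a \<le> th" by (auto simp: T_def)
  have "a \<noteq> s" using a1 Fs by auto
  hence as: "a < s" using a1 by simp
  have up: "\<And>x. x \<in> T \<Longrightarrow> x \<le> a" unfolding a_def
    using \<open>bdd_above T\<close> by (simp add: cSup_upper)
  obtain z where z: "a < z" "z < s" "F s - F a = (s - a) * F' z"
    using MVT2[OF as, of F F'] der t a1 by (metis order_trans)
  have "F z > th"
  proof (rule ccontr)
    assume "\<not> F z > th"
    hence "z \<in> T" using z a1 by (auto simp: T_def)
    thus False using up z by fastforce
  qed
  hence "F' z < 0" using neg z a1 t by auto
  hence "(s - a) * F' z < 0" using as by (simp add: mult_pos_neg)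
  thus False using z Fs a1 by linarith
qed

lemma damp:
  fixes y y' mu :: "real \<Rightarrow> real"
  assumes der: "\<forall>s\<ge>s0. (y has_real_derivative y' s) (at s)"
    and ineq: "\<forall>s\<ge>s0. y s * y' s \<le> - mu s * ((y s)\<^sup>2 - eps * \<bar>y s\<bar>)"
    and mu: "\<forall>s\<ge>s0. mu s \<ge> M" and M: "M > 0" and eps: "eps \<ge> 0" and d: "d > 0"
  shows "\<exists>S. \<forall>s\<ge>S. \<bar>y s\<bar> \<le> eps + d"
proof -
  define F where "F = (\<lambda>s. (y s)\<^sup>2)"
  define F' where "F' = (\<lambda>s. 2 * y s * y' s)"
  define th where "th = (eps + d)\<^sup>2"
  define k where "k = 2 * M * ((eps + d) * d)"
  have kpos: "k > 0" using M eps d by (simp add: k_def)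
  have derF: "\<forall>s\<ge>s0. (F has_real_derivative F' s) (at s)"
  proof (intro allI impI)
    fix s assume "s \<ge> s0"
    hence "(y has_real_derivative y' s) (at s)" using der by auto
    from DERIV_mult[OF this this] show "(F has_real_derivative F' s) (at s)"
      unfolding F_def F'_def power2_eq_square by (simp add: algebra_simps)
  qed
  have negk: "F' s \<le> - k" if s: "s \<ge> s0" and Fs: "F s > th" for s
  proof -
    have "(eps + d)\<^sup>2 < \<bar>y s\<bar>\<^sup>2" using Fs by (simp add: F_def th_def)
    hence ya: "\<bar>y s\<bar> > eps + d" using eps d
      by (meson abs_ge_zero power_less_imp_less_base)
    have "(eps + d) * d \<le> \<bar>y s\<bar> * (\<bar>y s\<bar> - eps)"
      by (rule mult_mono) (use ya eps d in auto)
    moreover have "\<bar>y s\<bar> * (\<bar>y s\<bar> - eps) = (y s)\<^sup>2 - eps * \<bar>y s\<bar>"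
      by (simp add: algebra_simps power2_eq_square)
    ultimately have X: "(eps + d) * d \<le> (y s)\<^sup>2 - eps * \<bar>y s\<bar>" by simp
    have "M * ((eps + d) * d) \<le> mu s * ((y s)\<^sup>2 - eps * \<bar>y s\<bar>)"
      by (rule mult_mono) (use X mu s M eps d in auto)
    moreover have "y s * y' s \<le> - mu s * ((y s)\<^sup>2 - eps * \<bar>y s\<bar>)" using ineq s by auto
    ultimately show ?thesis unfolding F'_def k_def by linarith
  qed
  have "\<exists>t\<ge>s0. F t \<le> th"
  proof (rule ccontr)
    assume "\<not> (\<exists>t\<ge>s0. F t \<le> th)"
    hence all: "\<forall>t\<ge>s0. F t > th" by auto
    define b where "b = s0 + F s0 / k + 1"
    have F0: "F s0 \<ge> 0" by (simp add: F_def)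
    have "F s0 / k \<ge> 0" using F0 kpos by simp
    hence sb: "s0 < b" by (simp add: b_def)
    obtain z where z: "s0 < z" "z < b" "F b - F s0 = (b - s0) * F' z"
      using MVT2[OF sb, of F F'] derF by auto
    have "F' z \<le> - k" using negk all z by auto
    hence "(b - s0) * F' z \<le> (b - s0) * (- k)" using sb by (metis diff_gt_0_iff_gt less_eq_real_def mult_left_mono)
    also have "\<dots> = - F s0 - k" using kpos by (simp add: b_def field_simps)
    finally have "F b < 0" using z kpos by linarith
    moreover have "F b \<ge> 0" by (simp add: F_def)
    ultimately show False by simp
  qed
  then obtain t where t: "t \<ge> s0" "F t \<le> th" by auto
  have neg: "\<forall>s\<ge>s0. F s > th \<longrightarrow> F' s < 0" using negk kpos by force
  have "\<bar>y s\<bar> \<le> eps + d" if "s \<ge> t" for s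
  proof -
    have "F s \<le> th" by (rule damp_stay[OF derF neg t that])
    hence "\<bar>y s\<bar>\<^sup>2 \<le> (eps + d)\<^sup>2" by (simp add: F_def th_def)
    thus ?thesis using eps d by (meson abs_ge_zero add_nonneg_nonneg less_imp_le power2_le_imp_le)
  qed
  thus ?thesis by blast
qed

lemma damp_tendsto:
  fixes y y' mu g :: "real \<Rightarrow> real"
  assumes der: "eventually (\<lambda>s. (y has_real_derivative y' s) (at s)) at_top"
    and eq: "eventually (\<lambda>s. y' s = - mu s * y s + g s) at_top"
    and mu: "eventually (\<lambda>s. mu s \<ge> M) at_top" and M: "M > 0"
    and lim: "((\<lambda>s. g s / mu s) \<longlongrightarrow> 0) at_top"
  shows "(y \<longlongrightarrow> 0) at_top"
proof (rule tendstoI)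
  fix e :: real assume e: "e > 0"
  have "eventually (\<lambda>s. dist (g s / mu s) 0 < e / 2) at_top"
    by (rule tendstoD[OF lim]) (use e in simp)
  hence "eventually (\<lambda>s. \<bar>g s / mu s\<bar> < e / 2) at_top" by simp
  then obtain s1 where s1: "\<And>s. s \<ge> s1 \<Longrightarrow> \<bar>g s / mu s\<bar> < e / 2"
    by (auto simp: eventually_at_top_linorder)
  obtain s2 where s2: "\<And>s. s \<ge> s2 \<Longrightarrow> (y has_real_derivative y' s) (at s)"
    using der by (auto simp: eventually_at_top_linorder)
  obtain s3 where s3: "\<And>s. s \<ge> s3 \<Longrightarrow> y' s = - mu s * y s + g s"
    using eq by (auto simp: eventually_at_top_linorder)
  obtain s4 where s4: "\<And>s. s \<ge> s4 \<Longrightarrow> mu s \<ge> M"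
    using mu by (auto simp: eventually_at_top_linorder)
  define s0 where "s0 = max (max s1 s2) (max s3 s4)"
  have ineq: "\<forall>s\<ge>s0. y s * y' s \<le> - mu s * ((y s)\<^sup>2 - e / 2 * \<bar>y s\<bar>)"
  proof (intro allI impI)
    fix s assume s: "s \<ge> s0"
    have mM: "mu s \<ge> M" using s4[of s] s by (simp add: s0_def)
    have mp: "mu s > 0" using mM M by linarith
    have "\<bar>g s / mu s\<bar> < e / 2" using s1[of s] s by (simp add: s0_def)
    hence "\<bar>g s\<bar> / mu s < e / 2" by (metis abs_div_pos[OF mp])
    hence gb: "\<bar>g s\<bar> \<le> e / 2 * mu s" using mp by (simp add: field_simps)
    have gy1: "g s * y s \<le> \<bar>g s\<bar> * \<bar>y s\<bar>" by (metis abs_ge_self abs_mult)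
    have gy2: "\<bar>g s\<bar> * \<bar>y s\<bar> \<le> e / 2 * mu s * \<bar>y s\<bar>" by (rule mult_right_mono[OF gb]) simp
    have e3: "y' s = - mu s * y s + g s" using s3[of s] s by (simp add: s0_def)
    have yy: "y s * y' s = - mu s * (y s)\<^sup>2 + g s * y s"
      by (simp only: e3) (simp add: algebra_simps power2_eq_square)
    have rr: "- mu s * ((y s)\<^sup>2 - e / 2 * \<bar>y s\<bar>) = - mu s * (y s)\<^sup>2 + e / 2 * mu s * \<bar>y s\<bar>"
      by (simp add: algebra_simps)
    show "y s * y' s \<le> - mu s * ((y s)\<^sup>2 - e / 2 * \<bar>y s\<bar>)" using gy1 gy2 yy rr by linarith
  qed
  have d1: "\<forall>s\<ge>s0. (y has_real_derivative y' s) (at s)" using s2 by (simp add: s0_def)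
  have d3: "\<forall>s\<ge>s0. mu s \<ge> M" using s4 by (simp add: s0_def)
  have "\<exists>S. \<forall>s\<ge>S. \<bar>y s\<bar> \<le> e / 2 + e / 4"
    by (rule damp[OF d1 ineq d3 M]) (use e in simp_all)
  then obtain S where S: "\<forall>s\<ge>S. \<bar>y s\<bar> \<le> e / 2 + e / 4" by blast
  have "\<forall>s\<ge>S. dist (y s) 0 < e"
  proof (intro allI impI)
    fix s assume "s \<ge> S"
    hence "\<bar>y s\<bar> \<le> e / 2 + e / 4" using S by blast
    thus "dist (y s) 0 < e" using e by simp
  qed
  thus "eventually (\<lambda>s. dist (y s) 0 < e) at_top" by (auto simp: eventually_at_top_linorder)
qed



lemma asymp_core:
  fixes w y :: "real \<Rightarrow> real" and m \<gamma> c C0 A c1 c2 K L \<kappa> :: real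
  assumes wd: "\<And>s. (w has_real_derivative (1-m)*w s*y s) (at s)"
   and yd: "\<And>s. (y has_real_derivative (- y s * (\<gamma> * w s + m * y s + c) + C0)) (at s)"
   and ypos: "\<And>s. y s > 0" and wpos: "\<And>s. w s > 0"
   and g: "\<gamma> > 0" and m: "m > 0" "m < 1" and A: "A > 0"
   and \<kappa>: "\<kappa> = (1-2*m)/(1-m)" and C0: "(1-m)*C0 = \<gamma>*A"
   and c1: "c1 = c/\<gamma>" and c2: "c2 = c1^2/A" and L: "L = c1^2/A + c1*K/A + \<kappa>/\<gamma>"
   and hlim: "((\<lambda>s. w s - A* s + c1*ln s) \<longlongrightarrow> K) at_top"
  shows "((\<lambda>s. s^2*((1-m)*w s*y s - A) + c1* s + c2*ln s) \<longlongrightarrow> L) at_top"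
proof -
  define R where "R = (\<lambda>s. w s - A* s + c1*ln s)"
  have Rlim: "(R \<longlongrightarrow> K) at_top" using hlim by (simp add: R_def)
  have lnlim: "((\<lambda>s::real. ln s / s) \<longlongrightarrow> 0) at_top" by real_asymp
  have ln2lim: "((\<lambda>s::real. (ln s)^2 / s) \<longlongrightarrow> 0) at_top" by real_asymp
  have invlim: "((\<lambda>s::real. 1 / s) \<longlongrightarrow> 0) at_top" by real_asymp
  have inv2lim: "((\<lambda>s::real. 1 / s^2) \<longlongrightarrow> 0) at_top" by real_asymp
  have idinf: "filterlim (\<lambda>s::real. s) at_infinity at_top"
    by (rule filterlim_at_top_imp_at_infinity[OF filterlim_ident])
  have "filterlim (\<lambda>s. s * (A - c1 * (ln s / s))) at_top at_top"
  proof -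
    have t: "((\<lambda>s. A - c1 * (ln s / s)) \<longlongrightarrow> A - c1 * 0) at_top"
      by (intro tendsto_intros lnlim)
    show ?thesis using filterlim_at_top_mult_tendsto_pos[OF t _ filterlim_ident] A by simp
  qed
  moreover have "eventually (\<lambda>s. s * (A - c1 * (ln s / s)) = A* s - c1*ln s) at_top"
    using eventually_gt_at_top[of 0] by eventually_elim (simp add: field_simps)
  ultimately have "filterlim (\<lambda>s. A* s - c1*ln s) at_top at_top"
    using filterlim_cong by fastforce
  from filterlim_tendsto_add_at_top[OF Rlim this]
  have wtop: "filterlim w at_top at_top" by (simp add: R_def)
  have winf: "filterlim w at_infinity at_top" by (rule filterlim_at_top_imp_at_infinity[OF wtop])
  have "((\<lambda>s. R s * (1/s) + A - c1 * (ln s / s)) \<longlongrightarrow> K * 0 + A - c1 * 0) at_top"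
    by (intro tendsto_intros Rlim invlim lnlim)
  moreover have "eventually (\<lambda>s. R s * (1/s) + A - c1 * (ln s / s) = w s / s) at_top"
    using eventually_gt_at_top[of 0] by eventually_elim (simp add: R_def field_simps)
  ultimately have wslim: "((\<lambda>s. w s / s) \<longlongrightarrow> A) at_top"
    using tendsto_cong by fastforce
  have swlim: "((\<lambda>s. s / w s) \<longlongrightarrow> 1 / A) at_top"
  proof -
    have "((\<lambda>s. 1 / (w s / s)) \<longlongrightarrow> 1 / A) at_top"
      by (intro tendsto_intros wslim) (use A in simp)
    moreover have "eventually (\<lambda>s. 1 / (w s / s) = s / w s) at_top" by simp
    ultimately show ?thesis using tendsto_cong by fastforce
  qed
  have gwtop: "filterlim (\<lambda>s. c + \<gamma> * w s) at_top at_top"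
    by (rule filterlim_tendsto_add_at_top[OF tendsto_const])
       (rule filterlim_tendsto_pos_mult_at_top[OF tendsto_const g wtop])
  have gwtop': "filterlim (\<lambda>s. \<gamma> * w s) at_top at_top"
    by (rule filterlim_tendsto_pos_mult_at_top[OF tendsto_const g wtop])
  have ev1: "eventually (\<lambda>s. \<gamma> * w s \<ge> 1) at_top"
    using gwtop' by (simp add: filterlim_at_top)
  have ylim: "(y \<longlongrightarrow> 0) at_top"
  proof (rule damp_tendsto[where mu = "\<lambda>s. c + \<gamma> * w s + m * y s" and g = "\<lambda>s. C0" and M = 1])
    show "eventually (\<lambda>s. (y has_real_derivative (- y s * (\<gamma> * w s + m * y s + c) + C0)) (at s)) at_top"
      using yd by simp
    show "eventually (\<lambda>s. - y s * (\<gamma> * w s + m * y s + c) + C0 = - (c + \<gamma> * w s + m * y s) * y s + C0) at_top"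
      by (simp add: algebra_simps)
    have mt: "filterlim (\<lambda>s. c + \<gamma> * w s + m * y s) at_top at_top"
      by (rule filterlim_at_top_mono[OF gwtop]) (use ypos m in \<open>auto intro!: always_eventually mult_nonneg_nonneg less_imp_le\<close>)
    thus "eventually (\<lambda>s. c + \<gamma> * w s + m * y s \<ge> 1) at_top" by (simp add: filterlim_at_top)
    show "((\<lambda>s. C0 / (c + \<gamma> * w s + m * y s)) \<longlongrightarrow> 0) at_top"
      by (rule tendsto_divide_0[OF tendsto_const filterlim_at_top_imp_at_infinity[OF mt]])
  qed simp
  define q where "q = (\<lambda>s. (1-m)*w s*y s)"
  define qd where "qd = (\<lambda>s. (1-m)*((1-m)*w s*y s*y s + (- y s * (\<gamma> * w s + m * y s + c) + C0)*w s))"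
  define ge where "ge = (\<lambda>s. (1-m)*w s*((1-2*m)*(y s)^2 - c*y s))"
  have C0': "C0 = \<gamma>*A/(1-m)" using C0 m by (simp add: field_simps)
  have qder: "(q has_real_derivative qd s) (at s)" for s
  proof -
    have "((\<lambda>s. (1-m) * (w s * y s)) has_real_derivative (1-m) * ((1-m)*w s*y s * y s + (- y s * (\<gamma> * w s + m * y s + c) + C0) * w s)) (at s)"
      using DERIV_cmult[OF DERIV_mult[OF wd yd], of "1-m"] by simp
    thus ?thesis unfolding q_def qd_def by (simp add: mult.assoc)
  qed
  have eder: "((\<lambda>s. q s - A) has_real_derivative qd s) (at s)" for s
    using DERIV_diff[OF qder[of s] DERIV_const] by simp
  have qdeq: "qd s = - (\<gamma> * w s) * (q s - A) + ge s" for s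
  proof -
    have h: "(1-m)*C0*w s = \<gamma>*A*w s" using C0 by simp
    show ?thesis unfolding qd_def q_def ge_def
      by (simp add: algebra_simps power2_eq_square) (use h in \<open>simp add: algebra_simps\<close>)
  qed
  have gelim: "((\<lambda>s. ge s / (\<gamma> * w s)) \<longlongrightarrow> 0) at_top"
  proof -
    have "((\<lambda>s. (1-m)*((1-2*m)*(y s)^2 - c*y s)/\<gamma>) \<longlongrightarrow> (1-m)*((1-2*m)*0^2 - c*0)/\<gamma>) at_top"
      by (intro tendsto_intros ylim) (use g in simp)
    moreover have "ge s / (\<gamma> * w s) = (1-m)*((1-2*m)*(y s)^2 - c*y s)/\<gamma>" for s
      using wpos[of s] g unfolding ge_def by (simp add: field_simps)
    ultimately show ?thesis by simp
  qed
  have elim: "((\<lambda>s. q s - A) \<longlongrightarrow> 0) at_top"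
  proof (rule damp_tendsto[where mu = "\<lambda>s. \<gamma> * w s" and g = ge and M = 1 and y' = qd])
    show "eventually (\<lambda>s. ((\<lambda>s. q s - A) has_real_derivative qd s) (at s)) at_top"
      using eder by simp
  qed (use qdeq ev1 gelim in auto)
  have qlim: "(q \<longlongrightarrow> A) at_top"
    using tendsto_add[OF elim tendsto_const[of A]] by simp
  have gwinf: "filterlim (\<lambda>s. \<gamma> * w s) at_infinity at_top"
    by (rule filterlim_at_top_imp_at_infinity[OF gwtop'])
  have Tlim: "((\<lambda>s. s * q s / w s) \<longlongrightarrow> 1) at_top"
  proof -
    have "((\<lambda>s. q s * (s / w s)) \<longlongrightarrow> A * (1 / A)) at_top" by (intro tendsto_intros qlim swlim)
    thus ?thesis using A by (simp add: mult.commute)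
  qed
  have Y1lim: "((\<lambda>s. s * y s) \<longlongrightarrow> 1 / (1-m)) at_top"
  proof -
    have "((\<lambda>s. (s * q s / w s) / (1-m)) \<longlongrightarrow> 1 / (1-m)) at_top" by (intro tendsto_intros Tlim) (use m in simp)
    moreover have "(s * q s / w s) / (1-m) = s * y s" for s
      using wpos[of s] m unfolding q_def by (simp add: field_simps)
    ultimately show ?thesis by simp
  qed
  define P where "P = (\<lambda>s. s * (q s - A) + c1)"
  define Pd where "Pd = (\<lambda>s. (q s - A) + qd s * s)"
  have Pder: "(P has_real_derivative Pd s) (at s)" for s
  proof -
    have "((\<lambda>x. x * (q x - A)) has_real_derivative 1 * (q s - A) + qd s * s) (at s)"
      by (rule DERIV_mult[OF DERIV_ident eder])
    from DERIV_add[OF this DERIV_const] show ?thesis unfolding P_def Pd_def by simp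
  qed
  have Plim: "(P \<longlongrightarrow> 0) at_top"
  proof (rule damp_tendsto[where mu = "\<lambda>s. \<gamma> * w s" and g = "\<lambda>s. Pd s + \<gamma> * w s * P s" and M = 1 and y' = Pd])
    have "((\<lambda>s. (q s - A) * (1 / (\<gamma> * w s)) + (1-m)*((1-2*m)*(s * y s)*(y s) - c*(s * y s))/\<gamma> + c1)
        \<longlongrightarrow> 0 * 0 + (1-m)*((1-2*m)*(1/(1-m))*0 - c*(1/(1-m)))/\<gamma> + c1) at_top"
      by (intro tendsto_intros elim Y1lim ylim tendsto_divide_0[OF tendsto_const gwinf]) (use g in simp)
    moreover have "(1-m)*((1-2*m)*(1/(1-m))*0 - c*(1/(1-m)))/\<gamma> + c1 = 0"
      using m g c1 by (simp add: field_simps)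
    moreover have "(q s - A) * (1 / (\<gamma> * w s)) + (1-m)*((1-2*m)*(s * y s)*(y s) - c*(s * y s))/\<gamma> + c1
        = (Pd s + \<gamma> * w s * P s) / (\<gamma> * w s)" for s
    proof -
      have "Pd s + \<gamma> * w s * P s = (q s - A) + s * ge s + \<gamma> * w s * c1"
        unfolding Pd_def P_def qdeq by (simp add: algebra_simps)
      moreover have "((q s - A) + s * ge s + \<gamma> * w s * c1) / (\<gamma> * w s) = (q s - A) * (1 / (\<gamma> * w s)) + (1-m)*((1-2*m)*(s * y s)*(y s) - c*(s * y s))/\<gamma> + c1"
        using wpos[of s] g unfolding ge_def by (simp add: field_simps power2_eq_square)
      ultimately show ?thesis by simp
    qed
    ultimately show "((\<lambda>s. (Pd s + \<gamma> * w s * P s) / (\<gamma> * w s)) \<longlongrightarrow> 0) at_top" by simp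
  qed (use Pder ev1 in auto)
  define Z where "Z = (\<lambda>x. x^2 * (q x - A) + c1 * x + c2 * ln x - L)"
  define Zd where "Zd = (\<lambda>s. 2 * s * (q s - A) + qd s * s^2 + c1 + c2 / s)"
  have Zder: "(Z has_real_derivative Zd s) (at s)" if s: "s > 0" for s
  proof -
    have d1: "((\<lambda>x. x^2) has_real_derivative 2 * s) (at s)"
      by (auto intro!: derivative_eq_intros)
    have "((\<lambda>x. x^2 * (q x - A) + c1 * x + c2 * ln x - L) has_real_derivative
       (2 * s * (q s - A) + qd s * s^2) + c1 * 1 + c2 * inverse s - 0) (at s)"
      by (intro DERIV_diff DERIV_add DERIV_mult d1 eder DERIV_cmult DERIV_ident DERIV_ln s DERIV_const)
    thus ?thesis unfolding Z_def Zd_def by (simp add: divide_inverse)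
  qed
  define T where "T = (\<lambda>s. s * q s / w s)"
  define N where "N = (\<lambda>s. c1 * s * R s - c2 * c1 * (ln s)^2 + c2 * R s * ln s - c1 * s * P s + c1^2 * s)"
  have Nlim: "((\<lambda>s. N s / w s) \<longlongrightarrow> (c1 * K + c1^2) / A) at_top"
  proof -
    have "((\<lambda>s. (c1 * R s - c2 * c1 * ((ln s)^2 / s) + c2 * R s * (ln s / s) - c1 * P s + c1^2) / (w s / s))
        \<longlongrightarrow> (c1 * K - c2 * c1 * 0 + c2 * K * 0 - c1 * 0 + c1^2) / A) at_top"
      by (intro tendsto_intros Rlim ln2lim lnlim Plim wslim) (use A in simp)
    moreover have "(c1 * R s - c2 * c1 * ((ln s)^2 / s) + c2 * R s * (ln s / s) - c1 * P s + c1^2) / (w s / s)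
        = N s / w s" if "s > 0" for s
      using that wpos[of s] unfolding N_def by (simp add: field_simps)
    ultimately show ?thesis
      using tendsto_cong[of "\<lambda>s. (c1 * R s - c2 * c1 * ((ln s)^2 / s) + c2 * R s * (ln s / s) - c1 * P s + c1^2) / (w s / s)"
          "\<lambda>s. N s / w s"] eventually_gt_at_top[of 0]
      by (smt (verit) eventually_elim2)
  qed
  have Zlim: "(Z \<longlongrightarrow> 0) at_top"
  proof (rule damp_tendsto[where mu = "\<lambda>s. \<gamma> * w s" and g = "\<lambda>s. Zd s + \<gamma> * w s * Z s" and M = 1 and y' = Zd])
    show "eventually (\<lambda>s. (Z has_real_derivative Zd s) (at s)) at_top"
      using eventually_gt_at_top[of 0] by eventually_elim (rule Zder)
    have "((\<lambda>s. (2 * (P s - c1) + c1 + c2 * (1 / s)) / (\<gamma> * w s) + \<kappa> * (T s)^2 / \<gamma> - L + N s / w s)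
        \<longlongrightarrow> 0 + \<kappa> * 1^2 / \<gamma> - L + (c1 * K + c1^2) / A) at_top"
    proof -
      have l1: "((\<lambda>s. (2 * (P s - c1) + c1 + c2 * (1 / s)) / (\<gamma> * w s)) \<longlongrightarrow> 0) at_top"
      proof -
        have "((\<lambda>x. 2 * (P x - c1) + c1 + c2 * (1 / x)) \<longlongrightarrow> 2 * (0 - c1) + c1 + c2 * 0) at_top"
          by (intro tendsto_intros Plim invlim)
        thus ?thesis by (rule tendsto_divide_0[OF _ gwinf])
      qed
      have TT: "(T \<longlongrightarrow> 1) at_top" using Tlim by (simp add: T_def)
      have l2: "((\<lambda>s. \<kappa> * (T s)^2 / \<gamma>) \<longlongrightarrow> \<kappa> * 1^2 / \<gamma>) at_top"
        by (intro tendsto_intros TT) (use g in simp)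
      show ?thesis by (rule tendsto_add[OF tendsto_diff[OF tendsto_add[OF l1 l2] tendsto_const] Nlim])
    qed
    moreover have "0 + \<kappa> * 1^2 / \<gamma> - L + (c1 * K + c1^2) / A = 0"
      using L A g by (simp add: field_simps power2_eq_square)
    moreover have "(2 * (P s - c1) + c1 + c2 * (1 / s)) / (\<gamma> * w s) + \<kappa> * (T s)^2 / \<gamma> - L + N s / w s
        = (Zd s + \<gamma> * w s * Z s) / (\<gamma> * w s)" if s: "s > 0" for s
    proof -
      have wp: "w s > 0" by (rule wpos)
      have a: "Zd s + \<gamma> * w s * Z s = 2*(P s - c1) + c1 + c2*(1/s) + s^2*ge s + \<gamma>*w s*(c1 * s + c2*ln s - L)"
        unfolding Zd_def Z_def P_def qdeq by (simp add: algebra_simps power2_eq_square)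
      have c: "s^2 * ge s / (\<gamma> * w s) = \<kappa> * (T s)^2 / \<gamma> - c1 * s * T s"
        unfolding ge_def T_def q_def \<kappa> c1 using wp g m by (simp add: field_simps power2_eq_square)
      have d: "c1 * s + c2 * ln s - c1 * s * T s = N s / w s"
      proof -
        have "N s = w s * (c1 * s + c2 * ln s) - c1 * s^2 * q s"
          unfolding N_def R_def P_def c2 using A by (simp add: field_simps power2_eq_square)
        thus ?thesis unfolding T_def using wp by (simp add: field_simps power2_eq_square)
      qed
      have "(Zd s + \<gamma> * w s * Z s) / (\<gamma> * w s) = (2*(P s - c1) + c1 + c2*(1/s)) / (\<gamma> * w s)
          + s^2 * ge s / (\<gamma> * w s) + (c1 * s + c2*ln s - L)"
        unfolding a using wp g by (simp add: add_divide_distrib)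
      thus ?thesis using c d by simp
    qed
    ultimately show "((\<lambda>s. (Zd s + \<gamma> * w s * Z s) / (\<gamma> * w s)) \<longlongrightarrow> 0) at_top"
      using tendsto_cong[of "\<lambda>s. (2 * (P s - c1) + c1 + c2 * (1 / s)) / (\<gamma> * w s) + \<kappa> * (T s)^2 / \<gamma> - L + N s / w s"
          "\<lambda>s. (Zd s + \<gamma> * w s * Z s) / (\<gamma> * w s)"] eventually_gt_at_top[of 0]
      by (smt (verit) eventually_elim2)
  qed (use ev1 in auto)
  have "((\<lambda>s. Z s + L) \<longlongrightarrow> 0 + L) at_top" by (intro tendsto_intros Zlim)
  moreover have "Z s + L = s^2*((1-m)*w s*y s - A) + c1 * s + c2*ln s" for s
    unfolding Z_def q_def by simp
  ultimately show ?thesis by simp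
qed



lemma s2gen:
  fixes R U m k j \<beta> a b V :: real
  assumes "R \<noteq> 0" "U \<noteq> 0" "m \<noteq> 0" "k \<noteq> 0" "j \<noteq> 0"
  shows "R^2 / (j * U) * (j / m * (b + j / R * a) + 2 * \<beta> / k * V + \<beta> * R * (a * V / (m * U)))
      = b * R^2 / (m * U) + j * (R * a / (m * U)) + \<beta> / j * (R^2 * V / U) * (2 / k + R * a / (m * U))"
  using assms by (simp add: field_simps power2_eq_square)

lemma s4gen:
  fixes x W k j \<beta> :: real
  assumes "k \<noteq> 0" "j \<noteq> 0"
  shows "x - j * x - \<beta> / j * W * (2 / k + x) - (1 - k) * x^2
     = - (x + 2 / k) * (\<beta> / j * W + (1 - k) * (x + 2 / k) + (j - 1 - (j + 3) * (1 - k)) / k)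
       + 2 * (j - 1 - (j + 1) * (1 - k)) / k^2"
  using assms by (simp add: field_simps power2_eq_square)

lemma alg_psi:
  fixes R U V m nn \<beta> a b :: real
  assumes R: "R > 0" and U: "U > 0" and V: "V > 0" and m: "m > 0" "m < 1" and nn: "nn > 1" and \<beta>: "\<beta> > 0"
    and eq: "(nn - 1) / m * (b + (nn - 1) / R * a) + 2 * \<beta> / (1 - m) * V + \<beta> * R * (a * V / (m * U)) = 0"
  shows "((R * a + b * R * R) * (m * U) - R * a * (m * (a * R))) / ((m * U) * (m * U))
    = - (R * a / (m * U) + 2 / (1 - m)) * (\<beta> / (nn - 1) * (R^2 * V / U) + m * (R * a / (m * U) + 2 / (1 - m))
        + (nn - 2 - (nn + 2) * m) / (1 - m)) + 2 * (nn - 2 - nn * m) / (1 - m)^2"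
proof -
  have m1: "1 - m \<noteq> 0" using m by simp
  have n1: "nn - 1 \<noteq> 0" using nn by simp
  have m2: "(1 - m)^2 \<noteq> 0" using m1 by simp
  have m3: "1 + m * m - m * 2 \<noteq> 0" using m2 by (simp add: power2_eq_square algebra_simps)
  define x where "x = R * a / (m * U)"
  define W where "W = R^2 * V / U"
  have s1: "((R * a + b * R * R) * (m * U) - R * a * (m * (a * R))) / ((m * U) * (m * U))
      = x + b * R^2 / (m * U) - m * x^2"
    unfolding x_def using R U m by (simp add: field_simps power2_eq_square)
  have s2: "R^2 / ((nn - 1) * U) * ((nn - 1) / m * (b + (nn - 1) / R * a) + 2 * \<beta> / (1 - m) * V + \<beta> * R * (a * V / (m * U)))
      = b * R^2 / (m * U) + (nn - 1) * x + \<beta> / (nn - 1) * W * (2 / (1 - m) + x)"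
    unfolding x_def W_def using s2gen[of R U m "1 - m" "nn - 1"] R U m m1 n1 by simp
  have s3: "b * R^2 / (m * U) = - (nn - 1) * x - \<beta> / (nn - 1) * W * (2 / (1 - m) + x)"
  proof -
    have z: "b * R^2 / (m * U) + (nn - 1) * x + \<beta> / (nn - 1) * W * (2 / (1 - m) + x) = 0"
      using s2 eq by (metis mult_zero_right)
    show ?thesis using z by linarith
  qed
  have s4: "x - (nn - 1) * x - \<beta> / (nn - 1) * W * (2 / (1 - m) + x) - m * x^2
     = - (x + 2 / (1 - m)) * (\<beta> / (nn - 1) * W + m * (x + 2 / (1 - m))
        + (nn - 2 - (nn + 2) * m) / (1 - m)) + 2 * (nn - 2 - nn * m) / (1 - m)^2"
  proof -
    have e1: "nn - 1 - 1 - (nn - 1 + 3) * (1 - (1 - m)) = nn - 2 - (nn + 2) * m" by simp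
    have e2: "nn - 1 - 1 - (nn - 1 + 1) * (1 - (1 - m)) = nn - 2 - nn * m" by simp
    show ?thesis using s4gen[of "1 - m" "nn - 1" x \<beta> W] m1 n1 unfolding e1 e2 by simp
  qed
  have s5: "x + (- (nn - 1) * x - \<beta> / (nn - 1) * W * (2 / (1 - m) + x)) - m * x^2
      = x - (nn - 1) * x - \<beta> / (nn - 1) * W * (2 / (1 - m) + x) - m * x^2" by (simp add: algebra_simps)
  have "((R * a + b * R * R) * (m * U) - R * a * (m * (a * R))) / ((m * U) * (m * U))
     = - (x + 2 / (1 - m)) * (\<beta> / (nn - 1) * W + m * (x + 2 / (1 - m))
        + (nn - 2 - (nn + 2) * m) / (1 - m)) + 2 * (nn - 2 - nn * m) / (1 - m)^2"
    unfolding s1 s3 s5 s4 ..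
  thus ?thesis by (simp only: x_def W_def)
qed

lemma gen_C0:
  fixes k j D \<beta> :: real
  assumes "k \<noteq> 0" "j \<noteq> 0" "\<beta> \<noteq> 0"
  shows "k * (2 * D / k^2) = \<beta> / j * (2 * j * D / (k * \<beta>))"
  using assms by (simp add: field_simps power2_eq_square)

lemma gen_c1:
  fixes k j E \<beta> :: real
  assumes "k \<noteq> 0" "j \<noteq> 0" "\<beta> \<noteq> 0"
  shows "j * E / (k * \<beta>) = (E / k) / (\<beta> / j)"
  using assms by (simp add: field_simps)

lemma gen_c2:
  fixes k j D E \<beta> :: real
  assumes "k \<noteq> 0" "j \<noteq> 0" "\<beta> \<noteq> 0" "D \<noteq> 0"
  shows "j * E^2 / (2 * D * k * \<beta>) = (j * E / (k * \<beta>))^2 / (2 * j * D / (k * \<beta>))"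
  using assms by (simp add: field_simps power2_eq_square)

lemma gen_L:
  fixes k j D E \<beta> p K :: real
  assumes "k \<noteq> 0" "j \<noteq> 0" "\<beta> \<noteq> 0" "D \<noteq> 0"
  shows "k * (2 * p * j * D / k^2 + j * E^2 / k^2 + E / k * K * \<beta>) / (2 * D * \<beta>)
    = (j * E / (k * \<beta>))^2 / (2 * j * D / (k * \<beta>)) + j * E / (k * \<beta>) * K / (2 * j * D / (k * \<beta>)) + p / k / (\<beta> / j)"
  using assms by (simp add: field_simps power2_eq_square)

lemma dw_alg:
  fixes U m e Q a :: real
  assumes "U > 0" "m > 0" "m < 1"
  shows "2 * e * e * Q + ((1 - m) / m) * (Q / U) * (a * e) * e^2
    = (1 - m) * (e^2 * Q) * (e * a / (m * U) + 2 / (1 - m))"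
  using assms by (simp add: field_simps power2_eq_square)

theorem lemma2p7:
  fixes n :: nat and m \<beta> lam K :: real and v :: "real \<Rightarrow> real"
  assumes "n \<ge> 3"
    and "0 < m" and "m < (real n - 2) / real n"
    and "m \<noteq> (real n - 2) / (real n + 2)"
    and "lam > 0" and "\<beta> > 0"
    and "radial_sol n m \<beta> lam v"
    and "(h1_fun n m \<beta> v \<longlongrightarrow> K) at_top"
  shows "((\<lambda>s. s\<^sup>2 * deriv (h2_fun n m \<beta> v K) s) \<longlongrightarrow>
           (1 - m) * a1_fun n m \<beta> K / (2 * (real n - 2 - real n * m) * \<beta>)) at_top"
proof -
  obtain v1 u1 u2 where vpos: "\<And>r. r \<ge> 0 \<Longrightarrow> v r > 0" and v0: "v 0 = lam"
    and vc: "continuous_on {0..} v"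
    and H: "\<And>r. r > 0 \<Longrightarrow> (v has_real_derivative v1 r) (at r) \<and>
               ((\<lambda>t. v t powr m) has_real_derivative u1 r) (at r) \<and>
               (u1 has_real_derivative u2 r) (at r) \<and>
               (real n - 1) / m * (u2 r + (real n - 1) / r * u1 r)
                 + 2 * \<beta> / (1 - m) * v r + \<beta> * r * v1 r = 0"
    and v1lim: "(v1 \<longlongrightarrow> 0) (at_right 0)"
    using assms(7) unfolding radial_sol_def by blast
  have n3: "real n \<ge> 3" using assms(1) by simp
  have m0: "m > 0" using assms(2) .
  have Dpos: "real n - 2 - real n * m > 0"
  proof -
    have "m * real n < real n - 2" using assms(3) n3 by (simp add: field_simps)
    thus ?thesis by (simp add: algebra_simps)
  qed
  have m1: "m < 1"
  proof -
    have "real n * m < real n" using Dpos by simp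
    thus ?thesis using n3 by simp
  qed
  have bpos: "\<beta> > 0" using assms(6) .
  define U where "U = (\<lambda>s. v (exp s) powr m)"
  define \<psi> where "\<psi> = (\<lambda>s. exp s * u1 (exp s) / (m * U s))"
  define y where "y = (\<lambda>s. \<psi> s + 2 / (1 - m))"
  define w where "w = w_fun m v"
  define \<gamma> where "\<gamma> = \<beta> / (real n - 1)"
  define c where "c = (real n - 2 - (real n + 2) * m) / (1 - m)"
  define C0 where "C0 = 2 * (real n - 2 - real n * m) / (1 - m)^2"
  have Vp: "v (exp s) > 0" for s using vpos[of "exp s"] by simp
  have Up: "U s > 0" for s using Vp[of s] by (simp add: U_def)
  have Hs: "(v has_real_derivative v1 (exp s)) (at (exp s)) \<and>
               ((\<lambda>t. v t powr m) has_real_derivative u1 (exp s)) (at (exp s)) \<and>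
               (u1 has_real_derivative u2 (exp s)) (at (exp s)) \<and>
               (real n - 1) / m * (u2 (exp s) + (real n - 1) / exp s * u1 (exp s))
                 + 2 * \<beta> / (1 - m) * v (exp s) + \<beta> * exp s * v1 (exp s) = 0" for s
    using H[of "exp s"] by simp
  have u1eq: "u1 (exp s) = m * v (exp s) powr (m - 1) * v1 (exp s)" for s
  proof -
    have "((\<lambda>t. v t powr m) has_real_derivative m * v (exp s) powr (m - of_nat 1) * v1 (exp s)) (at (exp s))"
      by (rule DERIV_fun_powr) (use Hs[of s] Vp[of s] in auto)
    thus ?thesis using Hs[of s] DERIV_unique by fastforce
  qed
  have pw1: "v (exp s) powr (m - 1) = U s / v (exp s)" for s
    unfolding U_def using Vp[of s] by (simp add: powr_diff)
  have v1eq: "v1 (exp s) = u1 (exp s) * v (exp s) / (m * U s)" for s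
    using u1eq[of s] pw1[of s] Vp[of s] Up[of s] m0 by (simp add: field_simps)
  have pwv: "v (exp s) powr (1 - m) = v (exp s) / U s" for s
    unfolding U_def using Vp[of s] by (simp add: powr_diff)
  have wexp: "w s = (exp s)^2 * (U s) powr ((1 - m) / m)" for s
    unfolding w_def w_fun_def U_def using m0 by (simp add: powr_powr)
  have wV: "w s = (exp s)^2 * v (exp s) / U s" for s
    unfolding w_def w_fun_def using pwv[of s] by simp
  have wpos: "w s > 0" for s using Vp[of s] Up[of s] by (simp add: wV)
  have dU: "(U has_real_derivative u1 (exp s) * exp s) (at s)" for s
    unfolding U_def using DERIV_chain2[OF conjunct1[OF conjunct2[OF Hs[of s]]] DERIV_exp] by simp
  have dw: "(w has_real_derivative (1-m) * w s * y s) (at s)" for s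
  proof -
    define p where "p = (1 - m) / m"
    have de2: "((\<lambda>s. (exp s)^2) has_real_derivative 2 * exp s * exp s) (at s)"
      by (auto intro!: derivative_eq_intros)
    have dp: "((\<lambda>s. U s powr p) has_real_derivative p * U s powr (p - of_nat 1) * (u1 (exp s) * exp s)) (at s)"
      by (rule DERIV_fun_powr[OF dU Up])
    have d: "((\<lambda>s. (exp s)^2 * U s powr p) has_real_derivative
        2 * exp s * exp s * U s powr p + p * U s powr (p - of_nat 1) * (u1 (exp s) * exp s) * (exp s)^2) (at s)"
      by (rule DERIV_mult[OF de2 dp])
    have fe: "w = (\<lambda>s. (exp s)^2 * U s powr p)" using wexp by (auto simp: p_def)
    have pp: "U s powr (p - of_nat 1) = U s powr p / U s" using Up[of s] by (simp add: powr_diff)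
    have "2 * exp s * exp s * U s powr p + p * U s powr (p - of_nat 1) * (u1 (exp s) * exp s) * (exp s)^2
       = (1-m) * w s * y s"
      unfolding pp y_def \<psi>_def wexp p_def[symmetric] p_def[symmetric] using dw_alg[OF Up[of s] m0 m1, of "exp s" "U s powr p" "u1 (exp s)"]
      by (simp add: p_def)
    thus ?thesis using d fe by simp
  qed
  have dy: "(y has_real_derivative (- y s * (\<gamma> * w s + m * y s + c) + C0)) (at s)" for s
  proof -
    have d1: "((\<lambda>s. exp s * u1 (exp s)) has_real_derivative exp s * u1 (exp s) + u2 (exp s) * exp s * exp s) (at s)"
      using DERIV_mult[OF DERIV_exp DERIV_chain2[OF conjunct1[OF conjunct2[OF conjunct2[OF Hs[of s]]]] DERIV_exp]]
      by (simp add: algebra_simps)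
    have d2: "((\<lambda>s. m * U s) has_real_derivative m * (u1 (exp s) * exp s)) (at s)"
      by (rule DERIV_cmult[OF dU])
    have d3: "(\<psi> has_real_derivative ((exp s * u1 (exp s) + u2 (exp s) * exp s * exp s) * (m * U s)
        - exp s * u1 (exp s) * (m * (u1 (exp s) * exp s))) / ((m * U s) * (m * U s))) (at s)"
      unfolding \<psi>_def by (rule DERIV_divide[OF d1 d2]) (use Up[of s] m0 in simp)
    have eqn: "(real n - 1) / m * (u2 (exp s) + (real n - 1) / exp s * u1 (exp s))
        + 2 * \<beta> / (1 - m) * v (exp s) + \<beta> * exp s * (u1 (exp s) * v (exp s) / (m * U s)) = 0"
      using Hs[of s] v1eq[of s] by simp
    have n1: "real n > 1" using n3 by simp
    note al = alg_psi[OF exp_gt_zero Up Vp m0 m1 n1 bpos eqn]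
    have eqq: "- (exp s * u1 (exp s) / (m * U s) + 2 / (1 - m)) *
        (\<beta> / (real n - 1) * ((exp s)\<^sup>2 * v (exp s) / U s) +
         m * (exp s * u1 (exp s) / (m * U s) + 2 / (1 - m)) +
         (real n - 2 - (real n + 2) * m) / (1 - m)) +
        2 * (real n - 2 - real n * m) / (1 - m)\<^sup>2 = - y s * (\<gamma> * w s + m * y s + c) + C0"
      unfolding y_def \<psi>_def \<gamma>_def c_def C0_def wV by simp
    have "(\<psi> has_real_derivative (- y s * (\<gamma> * w s + m * y s + c) + C0)) (at s)"
      using d3[unfolded al eqq] .
    from DERIV_add[OF this DERIV_const] show ?thesis unfolding y_def by simp
  qed
  have psiv: "\<psi> s = exp s * v1 (exp s) / v (exp s)" for s
    unfolding \<psi>_def v1eq using Vp[of s] Up[of s] m0 by (simp add: field_simps)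
  have vlim: "(v \<longlongrightarrow> lam) (at_right 0)"
  proof -
    have "(v \<longlongrightarrow> v 0) (at 0 within {0..})" using vc by (simp add: continuous_on_def)
    hence "(v \<longlongrightarrow> v 0) (at 0 within {0<..})" by (rule tendsto_within_subset) auto
    thus ?thesis using v0 by simp
  qed
  have l0: "((\<lambda>r. r * v1 r / v r) \<longlongrightarrow> 0 * 0 / lam) (at_right 0)"
    by (intro tendsto_intros v1lim vlim) (use assms(5) in simp)
  have hexp: "filterlim exp (at_right (0::real)) at_bot"
    by (simp add: filterlim_at exp_at_bot)
  have "((\<lambda>s. exp s * v1 (exp s) / v (exp s)) \<longlongrightarrow> 0) at_bot"
    using filterlim_compose[OF l0 hexp] by simp
  moreover have "\<psi> = (\<lambda>s. exp s * v1 (exp s) / v (exp s))" using psiv by (rule ext)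
  ultimately have "(\<psi> \<longlongrightarrow> 0) at_bot" by simp
  hence ylimb: "(y \<longlongrightarrow> 0 + 2 / (1 - m)) at_bot" unfolding y_def by (intro tendsto_intros)
  have ycont: "continuous_on S y" for S
    using dy by (meson DERIV_continuous continuous_at_imp_continuous_on)
  have C0pos: "C0 > 0" using Dpos m1 by (simp add: C0_def)
  have ypos: "y s > 0" for s
  proof (rule ccontr)
    assume "\<not> y s > 0"
    hence ys: "y s \<le> 0" by simp
    have "2 / (1 - m) > 1 / (1 - m)" using m1 by (simp add: divide_strict_right_mono)
    hence "eventually (\<lambda>t. y t > 1 / (1 - m)) at_bot"
      using order_tendstoD(1)[OF ylimb] by simp
    then obtain N where N: "\<And>t. t \<le> N \<Longrightarrow> y t > 1 / (1 - m)"
      by (auto simp: eventually_at_bot_linorder)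
    define sb where "sb = min N (s - 1)"
    have ysb: "y sb > 0" using N[of sb] m1 by (simp add: sb_def) (smt (verit) divide_pos_pos)
    have sbs: "sb < s" by (simp add: sb_def)
    define S where "S = {t \<in> {sb..s}. y t \<le> 0}"
    have "S = {sb..s} \<inter> y -` {..0}" unfolding S_def by auto
    hence clS: "closed S" using continuous_closed_preimage[OF ycont closed_atLeastAtMost closed_atMost] by simp
    have sS: "s \<in> S" using ys sbs by (simp add: S_def)
    have bS: "bdd_below S" unfolding S_def by (rule bdd_belowI[of _ sb]) auto
    define t0 where "t0 = Inf S"
    have t0S: "t0 \<in> S" unfolding t0_def using closed_contains_Inf[OF _ bS clS] sS by blast
    have low: "\<And>x. x \<in> S \<Longrightarrow> t0 \<le> x" unfolding t0_def using bS by (simp add: cInf_lower)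
    have t0a: "sb \<le> t0" "t0 \<le> s" "y t0 \<le> 0" using t0S by (auto simp: S_def)
    have sbt0: "sb < t0" using t0a ysb by (metis order.order_iff_strict not_less)
    have yt0: "y t0 = 0"
    proof (rule ccontr)
      assume "y t0 \<noteq> 0"
      hence "y t0 < 0" using t0a by simp
      obtain x where x: "sb \<le> x" "x \<le> t0" "y x = 0"
        using IVT2'[of y t0 0 sb] \<open>y t0 < 0\<close> ysb sbt0 ycont by force
      hence "x \<in> S" using t0a by (simp add: S_def)
      hence "t0 \<le> x" by (rule low)
      hence "x = t0" using x by simp
      thus False using x \<open>y t0 \<noteq> 0\<close> by simp
    qed
    have "(y has_real_derivative C0) (at t0)" using dy[of t0] yt0 by simp
    then obtain d where d: "d > 0" "\<And>h. h > 0 \<Longrightarrow> h < d \<Longrightarrow> y (t0 - h) < y t0"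
      using DERIV_pos_inc_left C0pos by blast
    define h where "h = min (d / 2) (t0 - sb)"
    have h: "h > 0" "h < d" "h \<le> t0 - sb" using d sbt0 by (auto simp: h_def)
    have "y (t0 - h) < 0" using d(2)[OF h(1,2)] yt0 by simp
    hence "t0 - h \<in> S" using h t0a by (simp add: S_def)
    hence "t0 \<le> t0 - h" by (rule low)
    thus False using h by simp
  qed
  define A where "A = 2 * (real n - 1) * (real n - 2 - real n * m) / ((1 - m) * \<beta>)"
  define c1 where "c1 = (real n - 1) * (real n - 2 - (real n + 2) * m) / ((1 - m) * \<beta>)"
  define c2 where "c2 = c1^2 / A"
  define \<kappa> where "\<kappa> = (1 - 2 * m) / (1 - m)"
  define L where "L = c1^2 / A + c1 * K / A + \<kappa> / \<gamma>"
  have nn1: "real n - 1 > 0" using n3 by simp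
  have gpos: "\<gamma> > 0" using bpos nn1 by (simp add: \<gamma>_def)
  have Apos: "A > 0" using Dpos nn1 m1 bpos by (simp add: A_def)
  have C0rel: "(1 - m) * C0 = \<gamma> * A"
    unfolding C0_def \<gamma>_def A_def by (rule gen_C0) (use m1 nn1 bpos in simp_all)
  have c1rel: "c1 = c / \<gamma>"
    unfolding c1_def c_def \<gamma>_def by (rule gen_c1) (use m1 nn1 bpos in simp_all)
  have h1eq: "h1_fun n m \<beta> v = (\<lambda>s. w s - A * s + c1 * ln s)"
    by (rule ext) (simp only: h1_fun_def h_fun_def w_def A_def c1_def)
  have hl: "((\<lambda>s. w s - A * s + c1 * ln s) \<longlongrightarrow> K) at_top" using assms(8) h1eq by simp
  have core: "((\<lambda>s. s^2 * ((1-m) * w s * y s - A) + c1 * s + c2 * ln s) \<longlongrightarrow> L) at_top"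
    by (rule asymp_core[OF dw dy ypos wpos gpos m0 m1 Apos \<kappa>_def C0rel c1rel c2_def L_def hl])
  have c2eq: "(real n - 1) * (real n - 2 - (real n + 2) * m)\<^sup>2
         / (2 * (real n - 2 - real n * m) * (1 - m) * \<beta>) = c2"
    unfolding c2_def c1_def A_def by (rule gen_c2) (use m1 nn1 bpos Dpos in simp_all)
  have h2eq: "h2_fun n m \<beta> v K = (\<lambda>s. w s - A * s + c1 * ln s - K - c2 * ((1 + ln s) / s))"
    by (rule ext) (simp only: h2_fun_def h1_fun_def h_fun_def w_def A_def c1_def c2eq)
  have dh2: "deriv (h2_fun n m \<beta> v K) s = (1-m) * w s * y s - A + c1 * inverse s
      - c2 * (((0 + inverse s) * s - (1 + ln s) * 1) / (s * s))" if s: "s > 0" for s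
  proof -
    have d1: "((\<lambda>s. (1 + ln s) / s) has_real_derivative ((0 + inverse s) * s - (1 + ln s) * 1) / (s * s)) (at s)"
      by (rule DERIV_divide[OF DERIV_add[OF DERIV_const DERIV_ln[OF s]] DERIV_ident]) (use s in simp)
    have "((\<lambda>s. w s - A * s + c1 * ln s - K - c2 * ((1 + ln s) / s)) has_real_derivative
       (1-m) * w s * y s - A * 1 + c1 * inverse s - 0 - c2 * (((0 + inverse s) * s - (1 + ln s) * 1) / (s * s))) (at s)"
      by (intro DERIV_diff DERIV_add DERIV_cmult dw DERIV_ident DERIV_ln s DERIV_const d1)
    thus ?thesis unfolding h2eq by (simp add: DERIV_imp_deriv)
  qed
  have ev: "eventually (\<lambda>s. s^2 * ((1-m) * w s * y s - A) + c1 * s + c2 * ln s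
      = s\<^sup>2 * deriv (h2_fun n m \<beta> v K) s) at_top"
    using eventually_gt_at_top[of 0]
  proof eventually_elim
    case (elim s)
    show ?case unfolding dh2[OF elim] using elim by (simp add: field_simps power2_eq_square)
  qed
  have Lval: "(1 - m) * a1_fun n m \<beta> K / (2 * (real n - 2 - real n * m) * \<beta>) = L"
    unfolding a1_fun_def L_def c1_def A_def \<kappa>_def \<gamma>_def by (rule gen_L) (use m1 nn1 bpos Dpos in simp_all)
  show ?thesis unfolding Lval using tendsto_cong[OF ev] core by simp
qed

end
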